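(* Let $A\in\mathbb{R}^{n\times n}$, $t\ge0$, and $\Omega=c+G\mathbf{B}_p$ with $c\in\mathbb{R}^n$, $G\in\mathbb{R}^{n\times p}$, $\mathrm{rank}(G)=n$. Then for every $k\in\mathbb{N}$ with $\lambda(t,\Omega,k)\ge0$, $$\mathcal{T}(t,k)\bigl(c+\lambda(t,\Omega,k)G\mathbf{B}_p\bigr)\subseteq\int_0^t\mathrm{e}^{sA}\Omega\,\mathrm{d}s.$$
   Context: A norm $\|\cdot\|$ is fixed on each $\mathbb{R}^k$, $\mathbf{B}_k$ is its closed unit ball, and matrices carry induced operator norms; $G^\dagger$ is the Moore–Penrose inverse. $\mathcal{T}(t,k)=\sum_{j=0}^{k-1}t^{j+1}A^j/(j+1)!$. $\theta(r,k)=\sum_{j=k}^\infty r^j/j!$. $\lambda(t,\Omega,k)=\dfrac{1-\mathrm{e}^{t\|A\|}\theta(t\|A\|,k)\|G^\dagger\|\|c\|}{1+\mathrm{e}^{t\|A\|}\theta(t\|A\|,k)\|G^\dagger\|\|G\|}$. Set-valued integral: $\int_0^tF(s)W\,\mathrm{d}s=\bigcup_w\int_0^tF(s)w(s)\,\mathrm{d}s$ over all Lebesgue measurable $w:[0,t]\to W$. *)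

theory Defs
  imports "HOL-Analysis.Analysis"
begin

definition is_norm :: "('a::real_vector \<Rightarrow> real) \<Rightarrow> bool" where
  "is_norm N \<longleftrightarrow> (\<forall>x. N x = 0 \<longleftrightarrow> x = 0) \<and> (\<forall>x y. N (x + y) \<le> N x + N y)
     \<and> (\<forall>a x. N (a *\<^sub>R x) = \<bar>a\<bar> * N x)"

definition op_norm :: "(real^'m \<Rightarrow> real) \<Rightarrow> (real^'n \<Rightarrow> real) \<Rightarrow> real^'m^'n \<Rightarrow> real" where
  "op_norm N1 N2 M = Sup {N2 (M *v x) | x. N1 x \<le> 1}"

definition unit_ball :: "('a \<Rightarrow> real) \<Rightarrow> 'a set" where
  "unit_ball N = {x. N x \<le> 1}"

definition moore_penrose :: "real^'p^'n \<Rightarrow> real^'n^'p \<Rightarrow> bool" where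
  "moore_penrose G X \<longleftrightarrow> G ** X ** G = G \<and> X ** G ** X = X
     \<and> transpose (G ** X) = G ** X \<and> transpose (X ** G) = X ** G"

definition pinv :: "real^'p^'n \<Rightarrow> real^'n^'p" where
  "pinv G = (THE X. moore_penrose G X)"

primrec matpow :: "real^'n^'n \<Rightarrow> nat \<Rightarrow> real^'n^'n" where
  "matpow A 0 = mat 1"
| "matpow A (Suc j) = A ** matpow A j"

definition mat_exp :: "real^'n^'n \<Rightarrow> real^'n^'n" where
  "mat_exp A = (\<Sum>j. (1 / fact j) *\<^sub>R matpow A j)"

definition T_mat :: "real^'n^'n \<Rightarrow> real \<Rightarrow> nat \<Rightarrow> real^'n^'n" where
  "T_mat A t k = (\<Sum>j<k. (t ^ (j + 1) / fact (j + 1)) *\<^sub>R matpow A j)"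

definition theta :: "real \<Rightarrow> nat \<Rightarrow> real" where
  "theta r k = (\<Sum>j. r ^ (j + k) / fact (j + k))"

definition lam :: "(real^'n \<Rightarrow> real) \<Rightarrow> (real^'p \<Rightarrow> real) \<Rightarrow> real^'n^'n \<Rightarrow> real
    \<Rightarrow> real^'n \<Rightarrow> real^'p^'n \<Rightarrow> nat \<Rightarrow> real" where
  "lam nn np A t c G k =
    (let r = t * op_norm nn nn A;
         q = exp r * theta r k * op_norm nn np (pinv G)
     in (1 - q * nn c) / (1 + q * op_norm np nn G))"

definition set_integral_exp :: "real^'n^'n \<Rightarrow> real \<Rightarrow> (real^'n) set \<Rightarrow> (real^'n) set" where
  "set_integral_exp A t W =
    {integral {0..t} (\<lambda>s. mat_exp (s *\<^sub>R A) *v w s) | w.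
       w \<in> borel_measurable (lebesgue_on {0..t}) \<and> (\<forall>s\<in>{0..t}. w s \<in> W)}"

end

theory Submission imports Defs begin

lemma isn_0: "is_norm N \<Longrightarrow> N 0 = 0"
  unfolding is_norm_def by auto

lemma isn_scale: "is_norm N \<Longrightarrow> N (a *\<^sub>R x) = \<bar>a\<bar> * N x"
  unfolding is_norm_def by auto

lemma isn_tri: "is_norm N \<Longrightarrow> N (x + y) \<le> N x + N y"
  unfolding is_norm_def by auto

lemma isn_minus: "is_norm N \<Longrightarrow> N (- x) = N x"
  using isn_scale[of N "-1" x] by simp

lemma isn_nonneg: "is_norm N \<Longrightarrow> N x \<ge> 0"
  using isn_tri[of N x "-x"] isn_0[of N] isn_minus[of N x] by simp

lemma isn_diff: "is_norm N \<Longrightarrow> N (x - y) \<le> N x + N y"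
  using isn_tri[of N x "-y"] isn_minus[of N y] by simp

lemma isn_pos: "is_norm N \<Longrightarrow> x \<noteq> 0 \<Longrightarrow> N x > 0"
  using isn_nonneg[of N x] unfolding is_norm_def by (metis order_le_less)

lemma isn_sum: assumes n: "is_norm N" shows "N (\<Sum>i\<in>S. f i) \<le> (\<Sum>i\<in>S. N (f i))"
proof (induction S rule: infinite_finite_induct)
  case (infinite S) then show ?case using isn_0[OF n] by simp
next
  case empty then show ?case using isn_0[OF n] by simp
next
  case (insert x F)
  then show ?case using isn_tri[OF n, of "f x" "sum f F"] by simp
qed

lemma isn_upper:
  fixes N :: "real^'n \<Rightarrow> real"
  assumes "is_norm N"
  shows "\<exists>C>0. \<forall>x. N x \<le> C * norm x"
proof -
  define C where "C = 1 + (\<Sum>i\<in>UNIV. N (axis i 1))"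
  have C0: "C > 0" unfolding C_def using isn_nonneg[OF assms] by (simp add: add_pos_nonneg sum_nonneg)
  have "N x \<le> C * norm x" for x
  proof -
    have "N x = N (\<Sum>i\<in>UNIV. x$i *\<^sub>R axis i 1)"
      using basis_expansion[of x] by (simp add: scalar_mult_eq_scaleR)
    also have "\<dots> \<le> (\<Sum>i\<in>UNIV. N (x$i *\<^sub>R axis i 1))" by (rule isn_sum[OF assms])
    also have "\<dots> = (\<Sum>i\<in>UNIV. \<bar>x$i\<bar> * N (axis i 1))" using isn_scale[OF assms] by simp
    also have "\<dots> \<le> (\<Sum>i\<in>UNIV. norm x * N (axis i 1))"
      by (intro sum_mono mult_right_mono isn_nonneg[OF assms] component_le_norm_cart)
    also have "\<dots> = norm x * (\<Sum>i\<in>UNIV. N (axis i 1))" by (simp add: sum_distrib_left)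
    also have "\<dots> \<le> C * norm x" unfolding C_def by (simp add: algebra_simps)
    finally show ?thesis .
  qed
  with C0 show ?thesis by blast
qed

lemma isn_cont:
  fixes N :: "real^'n \<Rightarrow> real"
  assumes "is_norm N"
  shows "continuous_on S N"
proof -
  obtain C where C: "C > 0" "\<And>x. N x \<le> C * norm x" using isn_upper[OF assms] by blast
  have L: "\<bar>N x - N y\<bar> \<le> C * dist x y" for x y
  proof -
    have "N x \<le> N (x - y) + N y" using isn_tri[OF assms, of "x - y" y] by simp
    moreover have "N y \<le> N (y - x) + N x" using isn_tri[OF assms, of "y - x" x] by simp
    moreover have "N (y - x) = N (x - y)" using isn_minus[OF assms, of "x - y"] by simp
    ultimately show ?thesis using C(2)[of "x - y"] by (simp add: dist_norm)
  qed
  show ?thesis unfolding continuous_on_iff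
  proof (intro ballI allI impI)
    fix x e assume "x \<in> S" "(e::real) > 0"
    show "\<exists>d>0. \<forall>x'\<in>S. dist x' x < d \<longrightarrow> dist (N x') (N x) < e"
    proof (intro exI[of _ "e / C"] conjI ballI impI)
      show "e / C > 0" using \<open>e > 0\<close> C by simp
      fix x' assume "dist x' x < e / C"
      then have "C * dist x' x < e" using C by (simp add: field_simps)
      then show "dist (N x') (N x) < e" using L[of x' x] by (simp add: dist_real_def)
    qed
  qed
qed

lemma isn_lower:
  fixes N :: "real^'n \<Rightarrow> real"
  assumes "is_norm N"
  shows "\<exists>D>0. \<forall>x. norm x \<le> D * N x"
proof -
  have ne: "sphere (0::real^'n) 1 \<noteq> {}"
  proof -
    obtain i :: 'n where True by blast
    have "axis i (1::real) \<in> sphere 0 1" by simp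
    then show ?thesis by blast
  qed
  obtain x0 where x0: "x0 \<in> sphere (0::real^'n) 1" "\<And>y. y \<in> sphere 0 1 \<Longrightarrow> N x0 \<le> N y"
    using continuous_attains_inf[OF compact_sphere ne isn_cont[OF assms]] by blast
  have x0nz: "x0 \<noteq> 0" using x0(1) by auto
  define m where "m = N x0"
  have m0: "m > 0" unfolding m_def using isn_pos[OF assms x0nz] .
  have "norm x \<le> (1/m) * N x" for x
  proof (cases "x = 0")
    case True then show ?thesis using isn_0[OF assms] by simp
  next
    case False
    have "(1 / norm x) *\<^sub>R x \<in> sphere 0 1" using False by simp
    then have "m \<le> N ((1 / norm x) *\<^sub>R x)" unfolding m_def using x0(2) by blast
    also have "\<dots> = N x / norm x" using isn_scale[OF assms] by simp
    finally have "m * norm x \<le> N x" using False by (simp add: field_simps)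
    then show ?thesis using m0 by (simp add: field_simps)
  qed
  then show ?thesis using m0 by (intro exI[of _ "1/m"]) auto
qed

lemma op_norm_bound:
  fixes N1 :: "real^'m \<Rightarrow> real" and N2 :: "real^'n \<Rightarrow> real" and M :: "real^'m^'n"
  assumes n1: "is_norm N1" and n2: "is_norm N2"
  shows "N2 (M *v x) \<le> op_norm N1 N2 M * N1 x" and "op_norm N1 N2 M \<ge> 0"
proof -
  obtain C where C: "C > 0" "\<And>y. N2 y \<le> C * norm y" using isn_upper[OF n2] by blast
  obtain D where D: "D > 0" "\<And>y. norm y \<le> D * N1 y" using isn_lower[OF n1] by blast
  define S where "S = {N2 (M *v x) | x. N1 x \<le> 1}"
  have bdd: "bdd_above S"
  proof (rule bdd_aboveI)
    fix z assume "z \<in> S"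
    then obtain y where y: "z = N2 (M *v y)" "N1 y \<le> 1" unfolding S_def by blast
    have "z \<le> C * norm (M *v y)" using C y by simp
    also have "\<dots> \<le> C * (onorm ((*v) M) * norm y)"
      using onorm[OF matrix_vector_mul_bounded_linear, of M y] C by simp
    also have "\<dots> \<le> C * (onorm ((*v) M) * (D * N1 y))"
      using D(2)[of y] C onorm_pos_le[OF matrix_vector_mul_bounded_linear, of M]
      by (simp add: mult_left_mono)
    also have "\<dots> \<le> C * (onorm ((*v) M) * D)"
      using y(2) C D onorm_pos_le[OF matrix_vector_mul_bounded_linear, of M]
      by (simp add: mult_left_mono)
    finally show "z \<le> C * (onorm ((*v) M) * D)" .
  qed
  have opS: "op_norm N1 N2 M = Sup S" unfolding op_norm_def S_def ..
  have "0 \<in> S" unfolding S_def using isn_0[OF n1] isn_0[OF n2]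
    by (intro CollectI exI[of _ 0]) (simp add: matrix_vector_mult_0_right)
  then show nn: "op_norm N1 N2 M \<ge> 0" unfolding opS using cSup_upper[OF _ bdd] by blast
  show "N2 (M *v x) \<le> op_norm N1 N2 M * N1 x"
  proof (cases "x = 0")
    case True then show ?thesis using isn_0[OF n1] isn_0[OF n2] by simp
  next
    case False
    have p: "N1 x > 0" using isn_pos[OF n1 False] .
    have "N1 ((1 / N1 x) *\<^sub>R x) = 1" using isn_scale[OF n1] p by simp
    then have "N2 (M *v ((1 / N1 x) *\<^sub>R x)) \<in> S" unfolding S_def by force
    then have "N2 (M *v ((1 / N1 x) *\<^sub>R x)) \<le> op_norm N1 N2 M" unfolding opS using cSup_upper[OF _ bdd] by blast
    moreover have "N2 (M *v ((1 / N1 x) *\<^sub>R x)) = N2 (M *v x) / N1 x"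
      using isn_scale[OF n2] p by (simp add: matrix_vector_mult_scaleR)
    ultimately show ?thesis using p by (simp add: field_simps)
  qed
qed


lemma mp_unique:
  fixes G :: "real^'p^'n"
  assumes X: "moore_penrose G X" and Y: "moore_penrose G Y"
  shows "X = Y"
proof -
  note T = matrix_transpose_mul
  have X1: "G ** X ** G = G" "X ** G ** X = X" "transpose (G ** X) = G ** X" "transpose (X ** G) = X ** G"
    using X unfolding moore_penrose_def by auto
  have Y1: "G ** Y ** G = G" "Y ** G ** Y = Y" "transpose (G ** Y) = G ** Y" "transpose (Y ** G) = Y ** G"
    using Y unfolding moore_penrose_def by auto
  have tG1: "transpose G = transpose G ** (G ** Y)"
  proof -
    have "transpose G = transpose (G ** Y ** G)" by (simp only: Y1(1))
    also have "\<dots> = transpose G ** transpose (G ** Y)" by (rule T)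
    also have "\<dots> = transpose G ** (G ** Y)" by (simp only: Y1(3))
    finally show ?thesis .
  qed
  have tG2: "transpose G = (X ** G) ** transpose G"
  proof -
    have "transpose G = transpose (G ** (X ** G))" by (simp only: matrix_mul_assoc X1(1))
    also have "\<dots> = transpose (X ** G) ** transpose G" by (rule T)
    also have "\<dots> = (X ** G) ** transpose G" by (simp only: X1(4))
    finally show ?thesis .
  qed
  have "X = X ** (G ** X)" by (simp only: matrix_mul_assoc X1(2))
  also have "\<dots> = X ** (transpose X ** transpose G)" by (simp only: X1(3) flip: T)
  also have "\<dots> = X ** (transpose X ** (transpose G ** (G ** Y)))" using tG1 by simp
  also have "\<dots> = X ** ((transpose X ** transpose G) ** (G ** Y))" by (simp only: matrix_mul_assoc)
  also have "\<dots> = X ** ((G ** X) ** (G ** Y))" by (simp only: X1(3) flip: T)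
  also have "\<dots> = X ** G ** Y" by (simp only: matrix_mul_assoc X1(1))
  finally have eX: "X = X ** G ** Y" .
  have "Y = (Y ** G) ** Y" by (simp only: Y1(2))
  also have "\<dots> = (transpose G ** transpose Y) ** Y" by (simp only: Y1(4) flip: T)
  also have "\<dots> = (((X ** G) ** transpose G) ** transpose Y) ** Y" using tG2 by simp
  also have "\<dots> = ((X ** G) ** (transpose G ** transpose Y)) ** Y" by (simp only: matrix_mul_assoc)
  also have "\<dots> = ((X ** G) ** (Y ** G)) ** Y" by (simp only: Y1(4) flip: T)
  also have "\<dots> = (X ** G) ** ((Y ** G) ** Y)" by (simp only: matrix_mul_assoc)
  also have "\<dots> = X ** G ** Y" by (simp only: Y1(2))
  finally show ?thesis using eX by simp
qed

lemma mp_exists: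
  fixes G :: "real^'p^'n"
  assumes surj: "surj ((*v) G)"
  shows "\<exists>X. moore_penrose G X"
proof -
  define S where "S = G ** transpose G"
  have inj: "inj ((*v) S)"
  proof (rule injI)
    have k: "S *v y = 0 \<Longrightarrow> y = 0" for y
    proof -
      assume "S *v y = 0"
      define u where "u = transpose G *v y"
      have Gu: "G *v u = 0" using \<open>S *v y = 0\<close> unfolding u_def S_def by (metis matrix_vector_mul_assoc)
      have "u \<bullet> u = y \<bullet> (G *v u)"
        unfolding u_def by (simp add: dot_lmul_matrix[symmetric] inner_commute)
      then have "u = 0" using Gu by simp
      obtain z where z: "y = G *v z" using surj by (metis surjD)
      have "y \<bullet> y = u \<bullet> z" unfolding u_def z by (metis dot_lmul_matrix inner_commute transpose_matrix_vector z)
      then show "y = 0" using \<open>u = 0\<close> by simp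
    qed
    fix a b assume "S *v a = S *v b"
    then have "S *v (a - b) = 0" by (simp add: matrix_vector_mult_diff_distrib)
    then show "a = b" using k[of "a - b"] by simp
  qed
  obtain B where B: "B ** S = mat 1" using inj matrix_left_invertible_injective by blast
  have B2: "S ** B = mat 1" using B matrix_left_right_inverse by blast
  have St: "transpose S = S" unfolding S_def by (simp add: matrix_transpose_mul)
  have "transpose B ** S = mat 1"
    using arg_cong[OF B2, of transpose] St by (simp add: matrix_transpose_mul)
  then have Bt: "transpose B = B"
    by (metis B2 matrix_mul_assoc matrix_mul_lid matrix_mul_rid)
  define X where "X = transpose G ** B"
  have GX: "G ** X = mat 1" unfolding X_def using B2 unfolding S_def by (simp add: matrix_mul_assoc)
  have "moore_penrose G X"
    unfolding moore_penrose_def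
  proof (intro conjI)
    show "G ** X ** G = G" using GX by simp
    show "X ** G ** X = X" using GX by (metis matrix_mul_assoc matrix_mul_rid)
    show "transpose (G ** X) = G ** X" using GX by (simp add: transpose_mat)
    show "transpose (X ** G) = X ** G" unfolding X_def using Bt
      by (simp add: matrix_transpose_mul matrix_mul_assoc)
  qed
  then show ?thesis by blast
qed

lemma pinv_right:
  fixes G :: "real^'p^'n"
  assumes "rank G = CARD('n)"
  shows "G *v (pinv G *v z) = z"
proof -
  have surj: "surj ((*v) G)" using assms full_rank_surjective by blast
  obtain X where X: "moore_penrose G X" using mp_exists[OF surj] by blast
  have "moore_penrose G (pinv G)" unfolding pinv_def
    by (rule theI[of "moore_penrose G" X]) (use X mp_unique in blast)+
  then have e: "G ** pinv G ** G = G" unfolding moore_penrose_def by simp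
  obtain y where y: "z = G *v y" using surj by (metis surjD)
  show ?thesis unfolding y using e by (metis matrix_vector_mul_assoc)
qed


lemma matpow_add: "matpow A (i + j) = matpow A i ** matpow A j"
  by (induction i) (simp_all add: matrix_mul_assoc)

lemma matpow_scale: "matpow (s *\<^sub>R A) j = s ^ j *\<^sub>R matpow A j"
  by (induction j) (simp_all add: scalar_matrix_assoc matrix_scalar_ac mult.commute)

lemma matpow_norm: "norm (matpow A j *v v) \<le> onorm ((*v) A) ^ j * norm v"
proof (induction j)
  case 0 then show ?case by simp
next
  case (Suc j)
  have K: "onorm ((*v) A) \<ge> 0" by (rule onorm_pos_le[OF matrix_vector_mul_bounded_linear])
  have "norm (matpow A (Suc j) *v v) = norm (A *v (matpow A j *v v))"
    by (simp add: matrix_vector_mul_assoc)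
  also have "\<dots> \<le> onorm ((*v) A) * norm (matpow A j *v v)"
    by (rule onorm[OF matrix_vector_mul_bounded_linear])
  also have "\<dots> \<le> onorm ((*v) A) * (onorm ((*v) A) ^ j * norm v)"
    using Suc K by (simp add: mult_left_mono)
  finally show ?case by simp
qed

lemma mat_norm_le: "norm (M::real^'n^'m) \<le> real (CARD('m) * CARD('n)) * onorm ((*v) M)"
proof -
  have "norm M \<le> (\<Sum>i\<in>UNIV. norm (M $ i))"
    unfolding norm_vec_def by (rule L2_set_le_sum) simp
  also have "\<dots> \<le> (\<Sum>i\<in>(UNIV::'m set). \<Sum>l\<in>(UNIV::'n set). \<bar>M $ i $ l\<bar>)"
    by (intro sum_mono norm_le_l1_cart)
  also have "\<dots> \<le> (\<Sum>i\<in>(UNIV::'m set). \<Sum>l\<in>(UNIV::'n set). onorm ((*v) M))"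
    by (intro sum_mono matrix_component_le_onorm)
  also have "\<dots> = real (CARD('m) * CARD('n)) * onorm ((*v) M)" by simp
  finally show ?thesis .
qed

lemma onorm_matpow: "onorm ((*v) (matpow A j)) \<le> onorm ((*v) A) ^ j"
  by (rule onorm_le) (rule matpow_norm)

lemma exp_summable: "summable (\<lambda>j. (1 / fact j) *\<^sub>R matpow (B::real^'n^'n) j)"
proof (rule summable_comparison_test)
  define C where "C = real (CARD('n) * CARD('n))"
  define K where "K = onorm ((*v) B)"
  show "summable (\<lambda>j. C * (inverse (fact j) * K ^ j))"
    by (intro summable_mult summable_exp)
  show "\<exists>N. \<forall>n\<ge>N. norm ((1 / fact n) *\<^sub>R matpow B n) \<le> C * (inverse (fact n) * K ^ n)"
  proof (intro exI allI impI)
    fix n :: nat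
    have "norm (matpow B n) \<le> C * onorm ((*v) (matpow B n))" unfolding C_def by (rule mat_norm_le)
    also have "\<dots> \<le> C * K ^ n" unfolding K_def C_def by (intro mult_left_mono onorm_matpow) simp
    finally have "norm (matpow B n) \<le> C * K ^ n" .
    then show "norm ((1 / fact n) *\<^sub>R matpow B n) \<le> C * (inverse (fact n) * K ^ n)"
      by (simp add: divide_simps mult.commute mult.left_commute)
  qed
qed

lemma bl_apply: "bounded_linear (\<lambda>M::real^'n^'m. M *v v)"
proof -
  have "linear (\<lambda>M::real^'n^'m. M *v v)"
    by (rule linearI) (simp_all add: matrix_vector_mult_add_rdistrib scaleR_matrix_vector_assoc)
  then show ?thesis using linear_conv_bounded_linear by blast
qed

lemma exp_apply_sums:
  "(\<lambda>j. (s ^ j / fact j) *\<^sub>R (matpow A j *v v)) sums (mat_exp (s *\<^sub>R A) *v v)"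
proof -
  have "(\<lambda>j. (1 / fact j) *\<^sub>R matpow (s *\<^sub>R A) j) sums mat_exp (s *\<^sub>R A)"
    unfolding mat_exp_def by (rule summable_sums[OF exp_summable])
  from bounded_linear.sums[OF bl_apply this, of v]
  show ?thesis by (simp add: matpow_scale scaleR_matrix_vector_assoc[symmetric] )
qed

lemma beta_aux:
  fixes J K M fj fk fm t T :: real
  assumes fm: "fm \<noteq> 0" and M: "M = J + K" and M0: "M \<noteq> 0"
  shows "t * (fj * fk / fm * T) - J * fj * fk / (M * fm) * (t * T) = fj * (K * fk) / (M * fm) * (t * T)"
proof -
  have 1: "t * (fj * fk / fm * T) = (t * fj * fk * T * M) / (M * fm)" using M0 fm by simp
  have "t * (fj * fk / fm * T) - J * fj * fk / (M * fm) * (t * T) = (t * fj * fk * T * M - J * fj * fk * (t * T)) / (M * fm)"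
    unfolding 1 by (simp add: diff_divide_distrib)
  also have "t * fj * fk * T * M - J * fj * fk * (t * T) = fj * (K * fk) * (t * T)"
    unfolding M by (simp add: algebra_simps)
  finally show ?thesis by simp
qed

lemma beta_int:
  fixes t :: real
  assumes t: "t \<ge> 0"
  shows "((\<lambda>s. s ^ j * (t - s) ^ k) has_integral (fact j * fact k / fact (j + k + 1) * t ^ (j + k + 1))) {0..t}"
proof (induction k arbitrary: j)
  case 0
  have "((\<lambda>s. s ^ j) has_integral (t ^ Suc j / real (Suc j) - 0 ^ Suc j / real (Suc j))) {0..t}"
  proof (rule fundamental_theorem_of_calculus[OF t])
    fix s :: real assume "s \<in> {0..t}"
    have "((\<lambda>s. s ^ Suc j) has_real_derivative (real (Suc j) * s ^ j)) (at s within {0..t})"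
      using DERIV_pow[of "Suc j" s] has_field_derivative_at_within by simp
    from DERIV_cdivide[OF this, of "real (Suc j)"]
    have "((\<lambda>s. s ^ Suc j / real (Suc j)) has_real_derivative s ^ j) (at s within {0..t})"
      by simp
    then show "((\<lambda>s. s ^ Suc j / real (Suc j)) has_vector_derivative s ^ j) (at s within {0..t})"
      by (simp add: has_real_derivative_iff_has_vector_derivative)
  qed
  moreover have "t ^ Suc j / real (Suc j) - 0 ^ Suc j / real (Suc j) = fact j * fact 0 / fact (j + 0 + 1) * t ^ (j + 0 + 1)"
  proof -
    have ff: "fact (j + 0 + 1) = real (Suc j) * (fact j :: real)" by simp
    have "fact j * fact 0 / fact (j + 0 + 1) = 1 / real (Suc j)"
      unfolding ff using fact_gt_zero[of j, where 'a=real] by simp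
    then show ?thesis by simp
  qed
  ultimately show ?case by simp
next
  case (Suc k)
  have i1: "((\<lambda>s. t * (s ^ j * (t - s) ^ k)) has_integral t * (fact j * fact k / fact (j + k + 1) * t ^ (j + k + 1))) {0..t}"
    by (rule has_integral_mult_right[OF Suc.IH])
  note i2 = Suc.IH[of "Suc j"]
  note i3 = has_integral_diff[OF i1 i2]
  have fe: "(\<lambda>s. t * (s ^ j * (t - s) ^ k) - s ^ Suc j * (t - s) ^ k) = (\<lambda>s. s ^ j * (t - s) ^ Suc k)"
    by (rule ext) (simp add: algebra_simps)
  define m where "m = j + k + 1"
  have fm: "fact (Suc m) = real (Suc m) * fact m" by simp
  have fj: "fact (Suc j) = real (Suc j) * fact j" by simp
  have fk: "fact (Suc k) = real (Suc k) * fact k" by simp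
  have ve: "t * (fact j * fact k / fact (j + k + 1) * t ^ (j + k + 1)) - fact (Suc j) * fact k / fact (Suc j + k + 1) * t ^ (Suc j + k + 1)
      = fact j * fact (Suc k) / fact (j + Suc k + 1) * t ^ (j + Suc k + 1)"
  proof -
    have e1: "Suc j + k + 1 = Suc m" "j + Suc k + 1 = Suc m" "j + k + 1 = m" unfolding m_def by simp_all
    have pos: "fact m > (0::real)" by simp
    have M: "real (Suc m) = real (Suc j) + real (Suc k)" unfolding m_def by simp
    have "t * (fact j * fact k / fact m * t ^ m) - real (Suc j) * fact j * fact k / (real (Suc m) * fact m) * (t * t ^ m)
       = fact j * (real (Suc k) * fact k) / (real (Suc m) * fact m) * (t * t ^ m)"
      by (rule beta_aux[OF _ M]) (use pos in auto)
    then show ?thesis unfolding e1 fm fj fk power_Suc by (simp add: mult.assoc)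
  qed
  show ?case using i3 unfolding fe ve .
qed


lemma integral_main:
  fixes A :: "real^'n^'n" and t :: real
  assumes t: "t \<ge> 0"
  shows "integral {0..t} (\<lambda>s. mat_exp (s *\<^sub>R A) *v (x - ((t - s) ^ k / fact k) *\<^sub>R (matpow A k *v x)))
         = T_mat A t k *v x"
proof -
  define y where "y = matpow A k *v x"
  define w where "w = (\<lambda>s. x - ((t - s) ^ k / fact k) *\<^sub>R y)"
  define a where "a = (\<lambda>j. (t ^ (j + 1) / fact (j + 1)) *\<^sub>R (matpow A j *v x))"
  define f where "f = (\<lambda>N s. \<Sum>j<N. (s ^ j / fact j) *\<^sub>R (matpow A j *v w s))"
  define K where "K = onorm ((*v) A)"
  have K0: "K \<ge> 0" unfolding K_def by (rule onorm_pos_le[OF matrix_vector_mul_bounded_linear])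
  have trm: "((\<lambda>s. (s ^ j / fact j) *\<^sub>R (matpow A j *v w s)) has_integral (a j - a (j + k))) {0..t}" for j
  proof -
    define v1 where "v1 = (1 / fact j) *\<^sub>R (matpow A j *v x)"
    define v2 where "v2 = (1 / (fact j * fact k)) *\<^sub>R (matpow A (j + k) *v x)"
    note i1 = has_integral_scaleR_left[OF beta_int[OF t, of j 0], of v1]
    note i2 = has_integral_scaleR_left[OF beta_int[OF t, of j k], of v2]
    note i3 = has_integral_diff[OF i1 i2]
    have fe: "(\<lambda>s. (s ^ j * (t - s) ^ 0) *\<^sub>R v1 - (s ^ j * (t - s) ^ k) *\<^sub>R v2)
            = (\<lambda>s. (s ^ j / fact j) *\<^sub>R (matpow A j *v w s))"
    proof (rule ext)
      fix s
      have "matpow A j *v w s = matpow A j *v x - ((t - s) ^ k / fact k) *\<^sub>R (matpow A (j + k) *v x)"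
        unfolding w_def y_def
        by (simp add: matrix_vector_mult_diff_distrib matrix_vector_mult_scaleR matrix_vector_mul_assoc matpow_add)
      then show "(s ^ j * (t - s) ^ 0) *\<^sub>R v1 - (s ^ j * (t - s) ^ k) *\<^sub>R v2 = (s ^ j / fact j) *\<^sub>R (matpow A j *v w s)"
        unfolding v1_def v2_def by (simp add: scaleR_right_diff_distrib)
    qed
    have ve1: "(fact j * fact 0 / fact (j + 0 + 1) * t ^ (j + 0 + 1)) *\<^sub>R v1 = a j"
      unfolding v1_def a_def by simp
    have ve2: "(fact j * fact k / fact (j + k + 1) * t ^ (j + k + 1)) *\<^sub>R v2 = a (j + k)"
      unfolding v2_def a_def by simp
    show ?thesis using i3 unfolding fe ve1 ve2 .
  qed
  have intf: "(f N has_integral (\<Sum>j<N. a j - a (j + k))) {0..t}" for N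
    unfolding f_def by (rule has_integral_sum) (auto intro: trm)
  define Mw where "Mw = norm x + (t ^ k / fact k) * norm y"
  have wb: "norm (w s) \<le> Mw" if "s \<in> {0..t}" for s
  proof -
    have "norm (w s) \<le> norm x + norm (((t - s) ^ k / fact k) *\<^sub>R y)"
      unfolding w_def by (rule norm_triangle_ineq4)
    also have "norm (((t - s) ^ k / fact k) *\<^sub>R y) = ((t - s) ^ k / fact k) * norm y"
      using that by simp
    also have "((t - s) ^ k / fact k) * norm y \<le> (t ^ k / fact k) * norm y"
      using that by (intro mult_right_mono divide_right_mono power_mono) auto
    finally show ?thesis unfolding Mw_def by simp
  qed
  have Mw0: "Mw \<ge> 0" unfolding Mw_def using t by simp
  have expsums: "(\<lambda>n. (t * K) ^ n / fact n) sums exp (t * K)"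
    using exp_converges[of "t * K"] by (simp add: divide_inverse mult.commute)
  have bound: "norm (f N s) \<le> exp (t * K) * Mw" if "s \<in> {0..t}" for N s
  proof -
    have "norm (f N s) \<le> (\<Sum>j<N. norm ((s ^ j / fact j) *\<^sub>R (matpow A j *v w s)))"
      unfolding f_def by (rule norm_sum)
    also have "\<dots> \<le> (\<Sum>j<N. ((t * K) ^ j / fact j) * Mw)"
    proof (rule sum_mono)
      fix j
      have s0: "s \<ge> 0" "s \<le> t" using that by auto
      have "norm ((s ^ j / fact j) *\<^sub>R (matpow A j *v w s)) = (s ^ j / fact j) * norm (matpow A j *v w s)"
        using s0 by simp
      also have "\<dots> \<le> (s ^ j / fact j) * (K ^ j * Mw)"
      proof (rule mult_left_mono)
        have "norm (matpow A j *v w s) \<le> K ^ j * norm (w s)" unfolding K_def by (rule matpow_norm)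
        also have "\<dots> \<le> K ^ j * Mw" using wb[OF that] K0 by (simp add: mult_left_mono)
        finally show "norm (matpow A j *v w s) \<le> K ^ j * Mw" .
      qed (use s0 in simp)
      also have "\<dots> \<le> (t ^ j / fact j) * (K ^ j * Mw)"
        using s0 K0 Mw0 by (intro mult_right_mono divide_right_mono power_mono) auto
      also have "\<dots> = ((t * K) ^ j / fact j) * Mw" by (simp add: power_mult_distrib)
      finally show "norm ((s ^ j / fact j) *\<^sub>R (matpow A j *v w s)) \<le> ((t * K) ^ j / fact j) * Mw" .
    qed
    also have "\<dots> = (\<Sum>j<N. (t * K) ^ j / fact j) * Mw" by (simp add: sum_distrib_right)
    also have "\<dots> \<le> exp (t * K) * Mw"
    proof (rule mult_right_mono[OF _ Mw0])
      show "(\<Sum>j<N. (t * K) ^ j / fact j) \<le> exp (t * K)"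
        unfolding sums_unique[OF expsums]
        by (rule sum_le_suminf[OF sums_summable[OF expsums]]) (use t K0 in auto)
    qed
    finally show ?thesis .
  qed
  have conv: "(\<lambda>N. f N s) \<longlonglongrightarrow> mat_exp (s *\<^sub>R A) *v w s" for s
    using exp_apply_sums[of s A "w s"] unfolding f_def sums_def .
  note dc = dominated_convergence[where f=f and S="{0..t}" and h="\<lambda>s. exp (t * K) * Mw"
      and g="\<lambda>s. mat_exp (s *\<^sub>R A) *v w s"]
  have lim1: "(\<lambda>N. integral {0..t} (f N)) \<longlonglongrightarrow> integral {0..t} (\<lambda>s. mat_exp (s *\<^sub>R A) *v w s)"
    by (rule dc(2)) (use intf bound conv in \<open>auto simp: integrable_on_def\<close>)
  have sa: "summable a"
  proof (rule summable_comparison_test)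
    show "summable (\<lambda>j. (t * norm x) * (inverse (fact j) * (t * K) ^ j))"
      by (intro summable_mult summable_exp)
    show "\<exists>N. \<forall>n\<ge>N. norm (a n) \<le> (t * norm x) * (inverse (fact n) * (t * K) ^ n)"
    proof (intro exI allI impI)
      fix n :: nat
      have "norm (a n) = (t ^ (n + 1) / fact (n + 1)) * norm (matpow A n *v x)"
        unfolding a_def using t by simp
      also have "\<dots> \<le> (t ^ (n + 1) / fact n) * (K ^ n * norm x)"
      proof (rule mult_mono)
        show "t ^ (n + 1) / fact (n + 1) \<le> t ^ (n + 1) / fact n"
          using t by (intro divide_left_mono) (auto simp: fact_mono)
        show "norm (matpow A n *v x) \<le> K ^ n * norm x" unfolding K_def by (rule matpow_norm)
      qed (use t in auto)
      also have "\<dots> = (t * norm x) * (inverse (fact n) * (t * K) ^ n)"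
        by (simp add: power_mult_distrib field_simps)
      finally show "norm (a n) \<le> (t * norm x) * (inverse (fact n) * (t * K) ^ n)" .
    qed
  qed
  have lim2: "(\<lambda>N. \<Sum>j<N. a j - a (j + k)) \<longlonglongrightarrow> suminf a - (\<Sum>j. a (j + k))"
    unfolding sum_subtractf
    by (intro tendsto_diff summable_LIMSEQ sa summable_ignore_initial_segment)
  have lim2': "(\<lambda>N. integral {0..t} (f N)) \<longlonglongrightarrow> (\<Sum>i<k. a i)"
  proof -
    have "(\<lambda>N. integral {0..t} (f N)) = (\<lambda>N. \<Sum>j<N. a j - a (j + k))"
      using intf integral_unique by blast
    then show ?thesis using lim2 suminf_split_initial_segment[OF sa, of k] by simp
  qed
  have "integral {0..t} (\<lambda>s. mat_exp (s *\<^sub>R A) *v w s) = (\<Sum>i<k. a i)"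
    using LIMSEQ_unique[OF lim1 lim2'] .
  also have "\<dots> = T_mat A t k *v x"
  proof -
    have "T_mat A t k *v x = (\<Sum>j<k. ((t ^ (j + 1) / fact (j + 1)) *\<^sub>R matpow A j) *v x)"
      unfolding T_mat_def using bounded_linear.linear[OF bl_apply[of x]] by (rule linear_sum)
    then show ?thesis unfolding a_def by (simp add: scaleR_matrix_vector_assoc)
  qed
  finally show ?thesis unfolding w_def y_def .
qed


lemma matpow_nn:
  assumes n: "is_norm nn"
  shows "nn (matpow A j *v v) \<le> op_norm nn nn A ^ j * nn v"
proof (induction j)
  case 0 then show ?case by simp
next
  case (Suc j)
  have a0: "op_norm nn nn A \<ge> 0" using op_norm_bound(2)[OF n n] .
  have "nn (matpow A (Suc j) *v v) = nn (A *v (matpow A j *v v))"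
    by (simp add: matrix_vector_mul_assoc)
  also have "\<dots> \<le> op_norm nn nn A * nn (matpow A j *v v)" by (rule op_norm_bound(1)[OF n n])
  also have "\<dots> \<le> op_norm nn nn A * (op_norm nn nn A ^ j * nn v)"
    using Suc a0 by (simp add: mult_left_mono)
  finally show ?case by simp
qed

lemma theta_ge:
  assumes r: "r \<ge> 0"
  shows "theta r k \<ge> r ^ k / fact k"
proof -
  have es: "(\<lambda>n. r ^ n / fact n) sums exp r"
    using exp_converges[of r] by (simp add: divide_inverse mult.commute)
  have s: "summable (\<lambda>j. r ^ (j + k) / fact (j + k))"
    using summable_ignore_initial_segment[OF sums_summable[OF es], of k] by simp
  have "(\<Sum>j<1. r ^ (j + k) / fact (j + k)) \<le> (\<Sum>j. r ^ (j + k) / fact (j + k))"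
    by (rule sum_le_suminf[OF s]) (use r in auto)
  then show ?thesis unfolding theta_def by simp
qed

theorem corollary2:
  fixes nn :: "real^'n \<Rightarrow> real" and np :: "real^'p \<Rightarrow> real"
    and A :: "real^'n^'n" and t :: real and c :: "real^'n" and G :: "real^'p^'n"
    and k :: nat
  assumes "is_norm nn" and "is_norm np"
    and "t \<ge> 0"
    and "rank G = CARD('n)"
    and "lam nn np A t c G k \<ge> 0"
  shows "(\<lambda>x. T_mat A t k *v x) ` ((\<lambda>b. c + lam nn np A t c G k *\<^sub>R (G *v b)) ` unit_ball np)
         \<subseteq> set_integral_exp A t ((\<lambda>b. c + G *v b) ` unit_ball np)"
proof
  note n1 = assms(1) and n2 = assms(2) and t = assms(3) and rk = assms(4)
  define a where "a = op_norm nn nn A"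
  define g where "g = op_norm np nn G"
  define h where "h = op_norm nn np (pinv G)"
  define r where "r = t * a"
  define q where "q = exp r * theta r k * h"
  define l where "l = lam nn np A t c G k"
  have l0: "l \<ge> 0" unfolding l_def using assms(5) .
  have a0: "a \<ge> 0" unfolding a_def using op_norm_bound(2)[OF n1 n1] .
  have g0: "g \<ge> 0" unfolding g_def using op_norm_bound(2)[OF n2 n1] .
  have h0: "h \<ge> 0" unfolding h_def using op_norm_bound(2)[OF n1 n2] .
  have r0: "r \<ge> 0" unfolding r_def using t a0 by simp
  have th: "theta r k \<ge> r ^ k / fact k" using theta_ge[OF r0] .
  have th0: "theta r k \<ge> 0" using th r0 by (meson order_trans divide_nonneg_pos fact_gt_zero zero_le_power)
  have q0: "q \<ge> 0" unfolding q_def using th0 h0 by simp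
  have leq: "l * (1 + q * g) = 1 - q * nn c"
  proof -
    have "1 + q * g > 0" using q0 g0 by (simp add: add_pos_nonneg)
    moreover have "l = (1 - q * nn c) / (1 + q * g)"
      unfolding l_def lam_def Let_def q_def r_def a_def g_def h_def by simp
    ultimately show ?thesis by simp
  qed
  fix z assume "z \<in> (\<lambda>x. T_mat A t k *v x) ` ((\<lambda>b. c + lam nn np A t c G k *\<^sub>R (G *v b)) ` unit_ball np)"
  then obtain b where b: "np b \<le> 1" and z: "z = T_mat A t k *v (c + l *\<^sub>R (G *v b))"
    unfolding unit_ball_def l_def by auto
  define x where "x = c + l *\<^sub>R (G *v b)"
  define y where "y = matpow A k *v x"
  define w where "w = (\<lambda>s. x - ((t - s) ^ k / fact k) *\<^sub>R y)"
  have nx: "nn x \<le> nn c + l * g"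
  proof -
    have "nn x \<le> nn c + nn (l *\<^sub>R (G *v b))" unfolding x_def by (rule isn_tri[OF n1])
    also have "nn (l *\<^sub>R (G *v b)) = l * nn (G *v b)" using isn_scale[OF n1] l0 by simp
    also have "nn (G *v b) \<le> g * np b" unfolding g_def by (rule op_norm_bound(1)[OF n2 n1])
    also have "g * np b \<le> g" using b g0 by (simp add: mult_left_le)
    finally show ?thesis using l0 by (simp add: mult_left_mono)
  qed
  have wmem: "w s \<in> (\<lambda>b. c + G *v b) ` unit_ball np" if s: "s \<in> {0..t}" for s
  proof -
    define \<beta> where "\<beta> = (t - s) ^ k / fact k"
    have b0: "\<beta> \<ge> 0" unfolding \<beta>_def using s by simp
    define b' where "b' = l *\<^sub>R b - \<beta> *\<^sub>R (pinv G *v y)"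
    have eq: "c + G *v b' = w s"
      unfolding b'_def w_def x_def \<beta>_def
      by (simp add: matrix_vector_mult_diff_distrib matrix_vector_mult_scaleR pinv_right[OF rk])
    have key: "\<beta> * a ^ k \<le> exp r * theta r k"
    proof -
      have "\<beta> * a ^ k = ((t - s) * a) ^ k / fact k" unfolding \<beta>_def by (simp add: power_mult_distrib)
      also have "\<dots> \<le> r ^ k / fact k" unfolding r_def using s a0
        by (intro divide_right_mono power_mono mult_right_mono) auto
      also have "\<dots> \<le> theta r k" by (rule th)
      also have "\<dots> \<le> exp r * theta r k" using th0 r0 by (simp add: mult_le_cancel_right1)
      finally show ?thesis .
    qed
    have "np b' \<le> np (l *\<^sub>R b) + np (\<beta> *\<^sub>R (pinv G *v y))" unfolding b'_def by (rule isn_diff[OF n2])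
    also have "\<dots> = l * np b + \<beta> * np (pinv G *v y)" using isn_scale[OF n2] l0 b0 by simp
    also have "\<dots> \<le> l + \<beta> * (h * nn y)"
    proof (rule add_mono)
      show "l * np b \<le> l" using b l0 by (simp add: mult_left_le)
      show "\<beta> * np (pinv G *v y) \<le> \<beta> * (h * nn y)"
        using b0 op_norm_bound(1)[OF n1 n2, of "pinv G" y] unfolding h_def by (simp add: mult_left_mono)
    qed
    also have "\<beta> * (h * nn y) \<le> \<beta> * (h * (a ^ k * nn x))"
      using matpow_nn[OF n1, of A k x] b0 h0 unfolding y_def a_def by (simp add: mult_left_mono)
    also have "\<beta> * (h * (a ^ k * nn x)) = (\<beta> * a ^ k) * h * nn x" by simp
    also have "\<dots> \<le> (exp r * theta r k) * h * (nn c + l * g)"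
      by (rule mult_mono[OF mult_right_mono[OF key h0] nx]) (use h0 th0 isn_nonneg[OF n1] in auto)
    also have "l + (exp r * theta r k) * h * (nn c + l * g) = l * (1 + q * g) + q * nn c"
      unfolding q_def by (simp add: algebra_simps)
    also have "\<dots> = 1" using leq by simp
    finally have "np b' \<le> 1" by simp
    then show ?thesis using eq unfolding unit_ball_def by force
  qed
  have meas: "w \<in> borel_measurable (lebesgue_on {0..t})"
  proof (rule continuous_imp_measurable_on_sets_lebesgue)
    show "continuous_on {0..t} w" unfolding w_def by (intro continuous_intros) simp
    show "{0..t} \<in> sets lebesgue" by simp
  qed
  have "z = integral {0..t} (\<lambda>s. mat_exp (s *\<^sub>R A) *v w s)"
    unfolding z w_def y_def x_def[symmetric] using integral_main[OF t, of A x k] by simp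
  then show "z \<in> set_integral_exp A t ((\<lambda>b. c + G *v b) ` unit_ball np)"
    unfolding set_integral_exp_def using meas wmem by blast
qed

end
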